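(* Let $V$ be a vector configuration of rank $r$ containing no copy of the zero vector, with $n=r+d+1$ elements and dual degree $\deg^*(V)=\delta$. Then \[\mathrm{DD}(V)=r-(d+1-2\delta),\qquad \operatorname{rank}(V)+\deg^*(V)=\mathrm{DD}(V)+\operatorname{codeg}^*(V),\qquad |V|=\mathrm{DD}(V)+2\operatorname{codeg}^*(V).\] Moreover, every oriented linear hyperplane $H$ with $|\overline{H}^-\cap V|=\operatorname{codeg}^*(V)$ satisfies $|H^+\cap V|=\mathrm{DD}(V)+\operatorname{codeg}^*(V)$.
   Context: A vector configuration is a finite family (repetitions allowed) $V$ of vectors in $\mathbb{R}^r$; $\operatorname{rank}(V)=\dim\operatorname{lin}(V)$, and cardinalities count multiplicities. For a nonzero linear functional $f$, the oriented linear hyperplane $H=\{f=0\}$ has $H^+=\{f>0\}$, $H^-=\{f<0\}$, $\overline{H}^-=\{f\le0\}$. Dual codegree: $\operatorname{codeg}^*(V)=\min_H|\overline{H}^-\cap V|$; dual degree: $\deg^*(V)=\max_H|H^+\cap V|-\operatorname{rank}(V)$, over oriented linear hyperplanes $H$. Covector discrepancy: $\mathrm{DD}(V)=\max_f\big|\,|\{v: f(v)>0\}|-|\{v:f(v)<0\}|\,\big|$ over all linear functionals $f$. *)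

theory Defs
  imports "HOL-Analysis.Analysis"
begin

text \<open>A vector configuration is a finite family (with repetitions) of vectors,
  represented as a list. Cardinalities count multiplicities.\<close>

definition vc_count :: "('a \<Rightarrow> bool) \<Rightarrow> 'a list \<Rightarrow> nat" where
  "vc_count P V = length (filter P V)"

definition vc_rank :: "(real^'n) list \<Rightarrow> nat" where
  "vc_rank V = dim (set V)"

text \<open>Oriented linear hyperplanes H = {f = 0} are given by nonzero linear functionals f.\<close>

definition nonzero_functional :: "(real^'n \<Rightarrow> real) \<Rightarrow> bool" where
  "nonzero_functional f \<longleftrightarrow> linear f \<and> f \<noteq> (\<lambda>_. 0)"

definition dual_codegree :: "(real^'n) list \<Rightarrow> nat" where
  "dual_codegree V = Min {vc_count (\<lambda>v. f v \<le> 0) V | f. nonzero_functional f}"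

definition dual_degree :: "(real^'n) list \<Rightarrow> int" where
  "dual_degree V = int (Max {vc_count (\<lambda>v. f v > 0) V | f. nonzero_functional f})
                    - int (vc_rank V)"

definition covector_discrepancy :: "(real^'n) list \<Rightarrow> int" where
  "covector_discrepancy V =
     Max {\<bar>int (vc_count (\<lambda>v. f v > 0) V) - int (vc_count (\<lambda>v. f v < 0) V)\<bar> | f :: real^'n \<Rightarrow> real. linear f}"

end

theory Submission imports Defs begin

lemma lin_comb:
  assumes "linear (f::real^'n\<Rightarrow>real)"
  shows "linear (\<lambda>x. f x + c * inner w x)"
proof (rule linearI)
  fix x y :: "real^'n" show "f (x + y) + c * inner w (x + y) = f x + c * inner w x + (f y + c * inner w y)"
    using linear_add[OF assms] by (simp add: inner_add_right algebra_simps)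
next
  fix a :: real and x :: "real^'n"
  show "f (a *\<^sub>R x) + c * inner w (a *\<^sub>R x) = a *\<^sub>R (f x + c * inner w x)"
    using linear_scale[OF assms, of a x] by (simp add: algebra_simps)
qed

lemma lin_neg:
  assumes "linear (f::real^'n\<Rightarrow>real)"
  shows "linear (\<lambda>x. - f x)"
proof (rule linearI)
  fix x y :: "real^'n" show "- f (x + y) = - f x + - f y"
    using linear_add[OF assms] by simp
next
  fix a :: real and x :: "real^'n"
  show "- f (a *\<^sub>R x) = a *\<^sub>R (- f x)"
    using linear_scale[OF assms, of a x] by simp
qed

lemma exists_w:
  fixes S :: "(real^'n) set"
  assumes "finite S" "0 \<notin> S"
  shows "\<exists>w. \<forall>v\<in>S. inner w v \<noteq> 0"
  using assms
proof (induction S rule: finite_induct)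
  case empty then show ?case by auto
next
  case (insert v S)
  then obtain w where w: "\<forall>u\<in>S. inner w u \<noteq> 0" by auto
  have v0: "v \<noteq> 0" using insert by auto
  show ?case
  proof (cases "inner w v = 0")
    case False then show ?thesis using w by auto
  next
    case True
    have "\<forall>u\<in>S. eventually (\<lambda>e. inner (w + e *\<^sub>R v) u \<noteq> 0) (at_right (0::real))"
    proof
      fix u assume u: "u \<in> S"
      have "((\<lambda>e. inner (w + e *\<^sub>R v) u) \<longlongrightarrow> inner (w + 0 *\<^sub>R v) u) (at_right (0::real))"
        by (intro tendsto_intros)
      then have t: "((\<lambda>e. inner (w + e *\<^sub>R v) u) \<longlongrightarrow> inner w u) (at_right (0::real))"
        by simp
      have "inner w u \<noteq> 0" using w u by blast
      from tendsto_imp_eventually_ne[OF t this]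
      show "eventually (\<lambda>e. inner (w + e *\<^sub>R v) u \<noteq> 0) (at_right (0::real))" .
    qed
    then have "eventually (\<lambda>e. \<forall>u\<in>S. inner (w + e *\<^sub>R v) u \<noteq> 0) (at_right (0::real))"
      by (rule eventually_ball_finite[OF insert(1)])
    then obtain b where b: "b > 0" "\<And>e. e > 0 \<Longrightarrow> e < b \<Longrightarrow> \<forall>u\<in>S. inner (w + e *\<^sub>R v) u \<noteq> 0"
      unfolding eventually_at_right_field by blast
    define e where "e = b / 2"
    have e: "e > 0" "e < b" using b by (auto simp: e_def)
    have "inner (w + e *\<^sub>R v) v = e * inner v v" using True by (simp add: inner_add_left)
    moreover have "inner v v > 0" using v0 by simp
    ultimately have "inner (w + e *\<^sub>R v) v \<noteq> 0" using e by simp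
    then show ?thesis using b(2)[OF e] by auto
  qed
qed


lemma count_compl: "vc_count (\<lambda>v. f v \<le> (0::real)) V = length V - vc_count (\<lambda>v. f v > 0) V"
  unfolding vc_count_def using sum_length_filter_compl[of "\<lambda>v. f v > 0" V]
  by (simp add: not_less)

lemma count_le: "vc_count P V \<le> length V"
  by (simp add: vc_count_def)

lemma count_pm: "vc_count (\<lambda>v. f v > (0::real)) V + vc_count (\<lambda>v. f v < 0) V \<le> length V"
  by (induction V) (auto simp: vc_count_def)

lemma count_nz: "\<forall>v\<in>set V. h v \<noteq> (0::real) \<Longrightarrow>
   vc_count (\<lambda>v. h v > 0) V + vc_count (\<lambda>v. h v < 0) V = length V"
  by (induction V) (auto simp: vc_count_def)

lemma count_split:
  fixes f h G :: "'a \<Rightarrow> real"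
  assumes "\<forall>v\<in>set V. (f v > 0 \<longrightarrow> h v > 0) \<and> (f v < 0 \<longrightarrow> h v < 0) \<and>
     (f v = 0 \<longrightarrow> (h v > 0 \<longleftrightarrow> G v > 0) \<and> (h v < 0 \<longleftrightarrow> G v < (0::real)))"
  shows "vc_count (\<lambda>v. h v > 0) V = vc_count (\<lambda>v. f v > 0) V + vc_count (\<lambda>v. f v = 0 \<and> G v > 0) V
    \<and> vc_count (\<lambda>v. h v < 0) V = vc_count (\<lambda>v. f v < 0) V + vc_count (\<lambda>v. f v = 0 \<and> G v < 0) V"
  using assms
proof (induction V)
  case Nil show ?case by (simp add: vc_count_def)
next
  case (Cons a V)
  have IH: "vc_count (\<lambda>v. h v > 0) V = vc_count (\<lambda>v. f v > 0) V + vc_count (\<lambda>v. f v = 0 \<and> G v > 0) V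
    \<and> vc_count (\<lambda>v. h v < 0) V = vc_count (\<lambda>v. f v < 0) V + vc_count (\<lambda>v. f v = 0 \<and> G v < 0) V"
    using Cons.IH Cons.prems by simp
  have pa: "(f a > 0 \<longrightarrow> h a > 0) \<and> (f a < 0 \<longrightarrow> h a < 0) \<and>
     (f a = 0 \<longrightarrow> (h a > 0 \<longleftrightarrow> G a > 0) \<and> (h a < 0 \<longleftrightarrow> G a < (0::real)))"
    using Cons.prems by simp
  consider "f a > 0" | "f a < 0" | "f a = 0" using less_linear[of "f a" 0] by blast
  then show ?case
  proof cases
    case 1 then have "h a > 0" using pa by blast
    then show ?thesis using IH 1 by (simp add: vc_count_def)
  next
    case 2 then have "h a < 0" using pa by blast
    then show ?thesis using IH 2 by (simp add: vc_count_def)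
  next
    case 3 then have "(h a > 0 \<longleftrightarrow> G a > 0) \<and> (h a < 0 \<longleftrightarrow> G a < 0)" using pa by blast
    then show ?thesis using IH 3 by (simp add: vc_count_def)
  qed
qed

lemma key:
  fixes V :: "(real^'n) list" and f :: "real^'n \<Rightarrow> real"
  assumes V0: "0 \<notin> set V" and Vne: "V \<noteq> []" and lf: "linear f"
    and pm: "vc_count (\<lambda>v. f v < 0) V \<le> vc_count (\<lambda>v. f v > 0) V"
  shows "\<exists>h. nonzero_functional h \<and>
     int (vc_count (\<lambda>v. f v > 0) V) - int (vc_count (\<lambda>v. f v < 0) V)
       \<le> int (vc_count (\<lambda>v. h v > 0) V) - int (vc_count (\<lambda>v. h v < 0) V)
     \<and> vc_count (\<lambda>v. h v > 0) V + vc_count (\<lambda>v. h v < 0) V = length V"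
proof -
  obtain w where w: "\<forall>v\<in>set V. inner w v \<noteq> 0" using exists_w[of "set V"] V0 by auto
  define a where "a = vc_count (\<lambda>v. f v = 0 \<and> inner w v > 0) V"
  define b where "b = vc_count (\<lambda>v. f v = 0 \<and> inner w v < 0) V"
  define s :: real where "s = (if b \<le> a then 1 else -1)"
  define G where "G = (\<lambda>x. s * inner w x)"
  have s0: "s \<noteq> 0" by (simp add: s_def)
  have G0: "\<forall>v\<in>set V. G v \<noteq> 0" using w s0 by (simp add: G_def)
  have ab: "vc_count (\<lambda>v. f v = 0 \<and> G v < 0) V \<le> vc_count (\<lambda>v. f v = 0 \<and> G v > 0) V"
  proof (cases "b \<le> a")
    case True then show ?thesis by (simp add: G_def s_def a_def b_def)
  next
    case False
    have e1: "(\<lambda>v. f v = 0 \<and> G v < 0) = (\<lambda>v. f v = 0 \<and> inner w v > 0)"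
      using False by (auto simp: G_def s_def)
    have e2: "(\<lambda>v. f v = 0 \<and> G v > 0) = (\<lambda>v. f v = 0 \<and> inner w v < 0)"
      using False by (auto simp: G_def s_def)
    show ?thesis using False unfolding e1 e2 a_def b_def by simp
  qed
  have EV: "\<forall>v\<in>set V. f v \<noteq> 0 \<longrightarrow> eventually (\<lambda>e. e * \<bar>G v\<bar> < \<bar>f v\<bar>) (at_right (0::real))"
  proof (intro ballI impI)
    fix v assume v: "v \<in> set V" "f v \<noteq> 0"
    have "((\<lambda>e. e * \<bar>G v\<bar>) \<longlongrightarrow> 0 * \<bar>G v\<bar>) (at_right (0::real))"
      by (intro tendsto_intros)
    then have t: "((\<lambda>e. e * \<bar>G v\<bar>) \<longlongrightarrow> 0) (at_right (0::real))" by simp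
    have "0 < \<bar>f v\<bar>" using v by simp
    from order_tendstoD(2)[OF t this]
    show "eventually (\<lambda>e. e * \<bar>G v\<bar> < \<bar>f v\<bar>) (at_right (0::real))" .
  qed
  have "\<forall>v\<in>set V. eventually (\<lambda>e. f v \<noteq> 0 \<longrightarrow> e * \<bar>G v\<bar> < \<bar>f v\<bar>) (at_right (0::real))"
  proof
    fix v assume v: "v \<in> set V"
    show "eventually (\<lambda>e. f v \<noteq> 0 \<longrightarrow> e * \<bar>G v\<bar> < \<bar>f v\<bar>) (at_right (0::real))"
    proof (cases "f v = 0")
      case True then show ?thesis by simp
    next
      case False then have "eventually (\<lambda>e. e * \<bar>G v\<bar> < \<bar>f v\<bar>) (at_right (0::real))"
        using EV v by blast
      then show ?thesis by (rule eventually_mono) simp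
    qed
  qed
  then have "eventually (\<lambda>e. \<forall>v\<in>set V. f v \<noteq> 0 \<longrightarrow> e * \<bar>G v\<bar> < \<bar>f v\<bar>) (at_right (0::real))"
    by (rule eventually_ball_finite[OF finite_set])
  then obtain c where c: "c > 0" "\<And>e. e > 0 \<Longrightarrow> e < c \<Longrightarrow> \<forall>v\<in>set V. f v \<noteq> 0 \<longrightarrow> e * \<bar>G v\<bar> < \<bar>f v\<bar>"
    unfolding eventually_at_right_field by blast
  define e where "e = c / 2"
  have e: "e > 0" "e < c" using c by (auto simp: e_def)
  have ee: "\<forall>v\<in>set V. f v \<noteq> 0 \<longrightarrow> e * \<bar>G v\<bar> < \<bar>f v\<bar>" using c(2)[OF e] .
  define h where "h = (\<lambda>x. f x + (e * s) * inner w x)"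
  have hG: "h x = f x + e * G x" for x by (simp add: h_def G_def)
  have lh: "linear h" unfolding h_def by (rule lin_comb[OF lf])
  have props: "\<forall>v\<in>set V. (f v > 0 \<longrightarrow> h v > 0) \<and> (f v < 0 \<longrightarrow> h v < 0) \<and>
     (f v = 0 \<longrightarrow> (h v > 0 \<longleftrightarrow> G v > 0) \<and> (h v < 0 \<longleftrightarrow> G v < (0::real)))"
  proof
    fix v assume v: "v \<in> set V"
    have A: "f v \<noteq> 0 \<Longrightarrow> \<bar>e * G v\<bar> < \<bar>f v\<bar>" using ee v e by (simp add: abs_mult)
    have h1: "f v > 0 \<longrightarrow> h v > 0" using A unfolding hG by (cases "f v > 0") (auto simp: abs_less_iff)
    have h2: "f v < 0 \<longrightarrow> h v < 0" using A unfolding hG by (cases "f v < 0") (auto simp: abs_less_iff)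
    have h3: "f v = 0 \<longrightarrow> (h v > 0 \<longleftrightarrow> G v > 0) \<and> (h v < 0 \<longleftrightarrow> G v < (0::real))"
      using e unfolding hG by (simp add: zero_less_mult_iff mult_less_0_iff)
    show "(f v > 0 \<longrightarrow> h v > 0) \<and> (f v < 0 \<longrightarrow> h v < 0) \<and>
     (f v = 0 \<longrightarrow> (h v > 0 \<longleftrightarrow> G v > 0) \<and> (h v < 0 \<longleftrightarrow> G v < (0::real)))"
      using h1 h2 h3 by blast
  qed
  have hnz: "\<forall>v\<in>set V. h v \<noteq> 0"
  proof
    fix v assume v: "v \<in> set V"
    show "h v \<noteq> 0"
    proof (cases "f v = 0")
      case True then show ?thesis using props G0 v by (metis less_irrefl neqE)
    next
      case False then show ?thesis using props v by (metis less_irrefl neqE)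
    qed
  qed
  have cs: "vc_count (\<lambda>v. h v > 0) V = vc_count (\<lambda>v. f v > 0) V + vc_count (\<lambda>v. f v = 0 \<and> G v > 0) V"
     "vc_count (\<lambda>v. h v < 0) V = vc_count (\<lambda>v. f v < 0) V + vc_count (\<lambda>v. f v = 0 \<and> G v < 0) V"
    using count_split[OF props] by blast+
  obtain v where "v \<in> set V" using Vne by (cases V) auto
  then have "h \<noteq> (\<lambda>_. 0)" using hnz by auto
  then have "nonzero_functional h" using lh by (simp add: nonzero_functional_def)
  moreover have "int (vc_count (\<lambda>v. f v > 0) V) - int (vc_count (\<lambda>v. f v < 0) V)
       \<le> int (vc_count (\<lambda>v. h v > 0) V) - int (vc_count (\<lambda>v. h v < 0) V)"
    using cs ab by simp
  moreover have "vc_count (\<lambda>v. h v > 0) V + vc_count (\<lambda>v. h v < 0) V = length V"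
    using count_nz[OF hnz] .
  ultimately show ?thesis by blast
qed


theorem mainTheorem7:
  fixes V :: "(real^'n) list" and r :: nat and d :: int and \<delta> :: int
  assumes "0 \<notin> set V"
    and "vc_rank V = r"
    and "int (length V) = int r + d + 1"
    and "dual_degree V = \<delta>"
  shows "covector_discrepancy V = int r - (d + 1 - 2 * \<delta>)
    \<and> int (vc_rank V) + dual_degree V = covector_discrepancy V + int (dual_codegree V)
    \<and> int (length V) = covector_discrepancy V + 2 * int (dual_codegree V)
    \<and> (\<forall>f. nonzero_functional f \<and> vc_count (\<lambda>v. f v \<le> 0) V = dual_codegree V
           \<longrightarrow> int (vc_count (\<lambda>v. f v > 0) V) = covector_discrepancy V + int (dual_codegree V))"
proof -
  define n where "n = length V"
  define S where "S = {vc_count (\<lambda>v. f v > 0) V | f. nonzero_functional f}"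
  define P where "P = Max S"
  obtain i :: 'n where True by blast
  have nz0: "nonzero_functional (\<lambda>x::real^'n. x $ i)"
  proof -
    have "linear (\<lambda>x::real^'n. x $ i)" by (rule linearI) simp_all
    moreover have "(\<lambda>x::real^'n. x $ i) \<noteq> (\<lambda>_. 0)"
    proof
      assume "(\<lambda>x::real^'n. x $ i) = (\<lambda>_. 0)"
      then have "(vec 1 :: real^'n) $ i = 0" by metis
      then show False by simp
    qed
    ultimately show ?thesis by (simp add: nonzero_functional_def)
  qed
  have Sfin: "finite S"
    by (rule finite_subset[of _ "{..length V}"]) (auto simp: S_def count_le)
  have Sne: "S \<noteq> {}" using nz0 by (auto simp: S_def)
  have PS: "P \<in> S" using Sfin Sne by (simp add: P_def)
  have Pge: "vc_count (\<lambda>v. f v > 0) V \<le> P" if "nonzero_functional f" for f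
    using that Sfin by (auto simp: P_def S_def intro!: Max_ge)
  obtain f0 where f0: "nonzero_functional f0" "vc_count (\<lambda>v. f0 v > 0) V = P"
    using PS by (auto simp: S_def)
  have Pn: "P \<le> n" using f0 count_le by (metis n_def)
  have ub: "\<bar>int (vc_count (\<lambda>v. f v > 0) V) - int (vc_count (\<lambda>v. f v < 0) V)\<bar> \<le> 2 * int P - int n"
    if lf: "linear f" for f :: "real^'n \<Rightarrow> real"
  proof (cases "V = []")
    case True then show ?thesis by (simp add: vc_count_def n_def)
  next
    case Vne: False
    have gen: "int (vc_count (\<lambda>v. g v > 0) V) - int (vc_count (\<lambda>v. g v < 0) V) \<le> 2 * int P - int n"
      if lg: "linear g" and pm: "vc_count (\<lambda>v. g v < 0) V \<le> vc_count (\<lambda>v. g v > 0) V" for g :: "real^'n \<Rightarrow> real"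
    proof -
      obtain h where h: "nonzero_functional h"
        "int (vc_count (\<lambda>v. g v > 0) V) - int (vc_count (\<lambda>v. g v < 0) V)
          \<le> int (vc_count (\<lambda>v. h v > 0) V) - int (vc_count (\<lambda>v. h v < 0) V)"
        "vc_count (\<lambda>v. h v > 0) V + vc_count (\<lambda>v. h v < 0) V = length V"
        using key[OF assms(1) Vne lg pm] by blast
      have "vc_count (\<lambda>v. h v > 0) V \<le> P" using Pge h(1) .
      then show ?thesis using h(2,3) unfolding n_def by linarith
    qed
    show ?thesis
    proof (cases "vc_count (\<lambda>v. f v < 0) V \<le> vc_count (\<lambda>v. f v > 0) V")
      case True then show ?thesis using gen[OF lf True] by linarith
    next
      case False
      have l2: "linear (\<lambda>x. - f x)" by (rule lin_neg[OF lf])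
      have e1: "(\<lambda>v. - f v > 0) = (\<lambda>v. f v < 0)" by auto
      have e2: "(\<lambda>v. - f v < 0) = (\<lambda>v. f v > 0)" by auto
      have "vc_count (\<lambda>v. - f v < 0) V \<le> vc_count (\<lambda>v. - f v > 0) V"
        using False unfolding e1 e2 by simp
      from gen[OF l2 this] show ?thesis unfolding e1 e2 using False by linarith
    qed
  qed
  define D where "D = {\<bar>int (vc_count (\<lambda>v. f v > 0) V) - int (vc_count (\<lambda>v. f v < 0) V)\<bar> | f :: real^'n \<Rightarrow> real. linear f}"
  have Dfin: "finite D"
  proof (rule finite_subset[of _ "{0..int n}"])
    show "D \<subseteq> {0..int n}"
    proof
      fix x assume "x \<in> D"
      then obtain f :: "real^'n \<Rightarrow> real" where "linear f" and x: "x = \<bar>int (vc_count (\<lambda>v. f v > 0) V) - int (vc_count (\<lambda>v. f v < 0) V)\<bar>"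
        unfolding D_def by blast
      have "vc_count (\<lambda>v. f v > 0) V + vc_count (\<lambda>v. f v < 0) V \<le> n" using count_pm n_def by metis
      then show "x \<in> {0..int n}" unfolding x by auto
    qed
  qed simp
  have f0pm: "vc_count (\<lambda>v. f0 v > 0) V + vc_count (\<lambda>v. f0 v < 0) V \<le> n" using count_pm n_def by metis
  have lf0: "linear f0" using f0(1) by (simp add: nonzero_functional_def)
  have f0in: "\<bar>int (vc_count (\<lambda>v. f0 v > 0) V) - int (vc_count (\<lambda>v. f0 v < 0) V)\<bar> \<in> D"
    unfolding D_def using lf0 by blast
  have f0val: "\<bar>int (vc_count (\<lambda>v. f0 v > 0) V) - int (vc_count (\<lambda>v. f0 v < 0) V)\<bar> = 2 * int P - int n"
    using ub[OF lf0] f0(2) f0pm by linarith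
  have DD: "covector_discrepancy V = 2 * int P - int n"
  proof -
    have "covector_discrepancy V = Max D" by (simp add: covector_discrepancy_def D_def)
    also have "Max D = 2 * int P - int n"
    proof (rule Max_eqI[OF Dfin])
      fix y assume "y \<in> D"
      then show "y \<le> 2 * int P - int n" unfolding D_def using ub by blast
    next
      show "2 * int P - int n \<in> D" using f0in f0val by simp
    qed
    finally show ?thesis .
  qed
  have CD: "dual_codegree V = n - P"
  proof -
    have "dual_codegree V = Min {vc_count (\<lambda>v. f v \<le> 0) V | f. nonzero_functional f}"
      by (simp add: dual_codegree_def)
    also have "{vc_count (\<lambda>v. f v \<le> 0) V | f. nonzero_functional f} = (\<lambda>k. n - k) ` S"
      unfolding S_def n_def by (auto simp: count_compl)
    also have "Min ((\<lambda>k. n - k) ` S) = n - P"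
    proof (rule Min_eqI)
      show "finite ((\<lambda>k. n - k) ` S)" using Sfin by simp
    next
      fix y assume "y \<in> (\<lambda>k. n - k) ` S"
      then obtain k where "k \<in> S" "y = n - k" by blast
      then show "n - P \<le> y" using Sfin by (simp add: P_def diff_le_mono2)
    next
      show "n - P \<in> (\<lambda>k. n - k) ` S" using PS by blast
    qed
    finally show ?thesis .
  qed
  have DG: "dual_degree V = int P - int r"
    using assms(2) by (simp add: dual_degree_def P_def S_def)
  have last: "int (vc_count (\<lambda>v. f v > 0) V) = covector_discrepancy V + int (dual_codegree V)"
    if "nonzero_functional f" "vc_count (\<lambda>v. f v \<le> 0) V = dual_codegree V" for f
  proof -
    have "vc_count (\<lambda>v. f v \<le> 0) V = n - vc_count (\<lambda>v. f v > 0) V" by (simp add: count_compl n_def)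
    moreover have "vc_count (\<lambda>v. f v > 0) V \<le> n" using count_le n_def by metis
    ultimately have "vc_count (\<lambda>v. f v > 0) V = P" using that(2) CD Pn by linarith
    then show ?thesis using DD CD Pn by simp
  qed
  show ?thesis
    using DD CD DG Pn last assms(2,3,4) n_def by auto
qed

end
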